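(* Let $a,b,c,d,e,f\in\mathbb{C}$ with $|a|=|b|=|c|=|d|=|e|=|f|=1$, and set \[\mathcal{H}(a,b,c,d,e,f):=(1+a+b+e)(1+\overline{c}+\overline{d}+\overline{f})(1+c\overline{a}+d\overline{b}+f\overline{e}).\] Then there exist complex numbers $s_1,s_2,s_3,s_4$ of modulus $1$ such that the three vectors $(1,1,1,1,1,1)$, $(1,a,b,e,s_1,s_2)$ and $(1,c,d,f,s_3,s_4)$ of $\mathbb{C}^6$ are pairwise orthogonal (with respect to the standard inner product $\langle u,v\rangle=\sum_k u_k\overline{v_k}$) if and only if both \[\mathcal{H}(a,b,c,d,e,f)=4-|1+a+b+e|^2-|1+c+d+f|^2-|1+c\overline{a}+d\overline{b}+f\overline{e}|^2\] and \[|1+a+b+e|\leq 2\] hold. *)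

theory Defs
  imports Complex_Main
begin

definition cinner :: "complex list \<Rightarrow> complex list \<Rightarrow> complex" where
  "cinner u v = (\<Sum>k<length u. u ! k * cnj (v ! k))"

definition HH :: "complex \<Rightarrow> complex \<Rightarrow> complex \<Rightarrow> complex \<Rightarrow> complex \<Rightarrow> complex \<Rightarrow> complex" where
  "HH a b c d e f = (1 + a + b + e) * (1 + cnj c + cnj d + cnj f)
      * (1 + c * cnj a + d * cnj b + f * cnj e)"

end

theory Submission imports Defs begin

lemma eq_norm_from_sq:
  fixes A B :: complex
  assumes "A * cnj A = B * cnj B" shows "cmod A = cmod B"
proof -
  have "complex_of_real (cmod A ^ 2) = complex_of_real (cmod B ^ 2)"
    using assms by (simp only: complex_norm_square)
  then have "cmod A ^ 2 = cmod B ^ 2" using of_real_eq_iff by blast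
  then show ?thesis by (simp add: power2_eq_iff_nonneg)
qed

lemma unit_dir:
  fixes W :: complex
  obtains u where "cmod u = 1" "W = of_real (cmod W) * u"
proof (cases "W = 0")
  case True then show ?thesis using that[of 1] by simp
next
  case False
  then show ?thesis using that[of "W / of_real (cmod W)"] by (simp add: norm_divide)
qed

lemma unit_pair:
  fixes W :: complex
  assumes "cmod W \<le> 2"
  shows "\<exists>p q. cmod p = 1 \<and> cmod q = 1 \<and> p + q = -W"
proof -
  obtain u where u: "cmod u = 1" "W = of_real (cmod W) * u" by (rule unit_dir)
  define r where "r = cmod W / 2"
  define h where "h = sqrt (1 - r^2)"
  have r0: "0 \<le> r" "r \<le> 1" using assms by (auto simp: r_def)
  have "r^2 \<le> 1" using r0 by (simp add: power_le_one)
  then have hh: "h^2 = 1 - r^2" by (simp add: h_def)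
  have c1: "cmod (Complex (-r) h) = 1" "cmod (Complex (-r) (-h)) = 1"
    using hh by (simp_all add: cmod_def)
  have s: "Complex (-r) h + Complex (-r) (-h) = of_real (-2*r)" by (simp add: complex_eq_iff)
  have "u * Complex (-r) h + u * Complex (-r) (-h) = -W"
    by (subst distrib_left[symmetric], subst s, subst u(2)) (simp add: r_def)
  then show ?thesis using c1 u(1) by (metis norm_mult mult_1)
qed

lemma back_main:
  fixes X Y Z :: complex
  assumes H: "X * cnj Y * Z = of_real (4 - cmod X^2 - cmod Y^2 - cmod Z^2)" and lt: "cmod X < 2"
  shows "\<exists>s1 s2 s3 s4. cmod s1 = 1 \<and> cmod s2 = 1 \<and> cmod s3 = 1 \<and> cmod s4 = 1 \<and>
          s1 + s2 = -X \<and> s3 + s4 = -Y \<and> cnj s1 * s3 + cnj s2 * s4 = -Z"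
proof -
  have h7: "X * cnj Y * Z = 4 - X * cnj X - Y * cnj Y - Z * cnj Z"
    using H by (simp add: complex_norm_square[symmetric])
  have ImH: "Im (X * cnj Y * Z) = 0" using H by simp
  obtain u where u1: "cmod u = 1" and uX: "X = of_real (cmod X) * u" and uIm: "Im (Z * cnj Y * u) = 0"
  proof (cases "X = 0")
    case True
    define w where "w = Z * cnj Y"
    show ?thesis
    proof (cases "w = 0")
      case True
      have "Im (Z * cnj Y * 1) = 0" by (simp only: w_def[symmetric] True mult_1_right) simp
      then show ?thesis using that[of 1] \<open>X = 0\<close> by simp
    next
      case False
      have "Im (w * (cnj w / of_real (cmod w))) = 0"
        by (simp add: mult.assoc[symmetric] del: complex_cnj_divide)
      then have i: "Im (Z * cnj Y * (cnj w / of_real (cmod w))) = 0" by (simp only: w_def)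
      have n: "cmod (cnj w / of_real (cmod w)) = 1" using False by (simp add: norm_divide)
      show ?thesis by (rule that[OF n _ i]) (simp add: \<open>X = 0\<close>)
    qed
  next
    case False
    have "Im (Z * cnj Y * (X / of_real (cmod X))) = Im (X * cnj Y * Z) / cmod X"
      by (simp only: Im_divide_of_real[symmetric]) (simp add: ac_simps)
    then show ?thesis using that[of "X / of_real (cmod X)"] False ImH by (simp add: norm_divide)
  qed
  define r where "r = cmod X / 2"
  define h where "h = sqrt (1 - r^2)"
  have r0: "0 \<le> r" "r < 1" using lt by (auto simp: r_def)
  have "r^2 < 1" using r0 by (simp add: power_less_one_iff abs_square_less_1)
  then have hh: "h^2 = 1 - r^2" and hpos: "h > 0" by (simp_all add: h_def)
  define p where "p = Complex (-r) h"
  have cp: "cmod p = 1" using hh by (simp add: cmod_def p_def)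
  have h2: "p * cnj p = 1" using cp complex_norm_square[of p] by simp
  have h3: "p + cnj p = - 2 * of_real r" by (simp add: p_def complex_eq_iff)
  have pne: "p - cnj p \<noteq> 0" using hpos by (simp add: p_def complex_eq_iff)
  have h1: "u * cnj u = 1" using u1 complex_norm_square[of u] by simp
  have h4: "X = 2 * of_real r * u" using uX by (simp add: r_def)
  have h5: "cnj X = 2 * of_real r * cnj u" using h4 by simp
  have h6: "Z * cnj Y * u = cnj Z * Y * cnj u"
  proof -
    have g: "\<And>w. Im w = 0 \<Longrightarrow> cnj w = w" by (simp add: complex_eq_iff)
    have "cnj (Z * cnj Y * u) = Z * cnj Y * u" by (rule g[OF uIm])
    then show ?thesis by simp
  qed
  define s1 where "s1 = u * p"
  define s2 where "s2 = u * cnj p"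
  define D where "D = cnj u * p - cnj u * cnj p"
  have Dne: "D \<noteq> 0" using pne u1 unfolding D_def
    by (metis mult_eq_0_iff norm_zero right_diff_distrib zero_neq_one complex_cnj_zero_iff)
  define s3 where "s3 = (Z - Y * cnj s2) / D"
  define s4 where "s4 = (Y * cnj s1 - Z) / D"
  have w2: "Z * cnj Y * u * cnj p + cnj Z * Y * cnj u * p = - (X * cnj Y * Z)"
  proof -
    have "Z * cnj Y * u * cnj p + cnj Z * Y * cnj u * p = Z * cnj Y * u * (p + cnj p)"
      using h6 by (simp add: algebra_simps)
    also have "\<dots> = - (X * cnj Y * Z)" using h3 h4 by (simp add: algebra_simps)
    finally show ?thesis .
  qed
  have XX: "X * cnj X = 4 * of_real r * of_real r" using h4 h5 h1
    by (simp add: algebra_simps)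
  have DD: "D * cnj D = 4 - 4 * of_real r * of_real r"
  proof -
    have "D * cnj D = (u * cnj u) * (2 * (p * cnj p) - (p + cnj p) * (p + cnj p) + 2 * (p * cnj p))"
      unfolding D_def by (simp add: algebra_simps power2_eq_square)
    also have "\<dots> = 4 - 4 * of_real r * of_real r" using h1 h2 h3 by (simp add: algebra_simps)
    finally show ?thesis .
  qed
  have n3: "cmod (Z - Y * cnj s2) = cmod D"
  proof (rule eq_norm_from_sq)
    have "(Z - Y * cnj s2) * cnj (Z - Y * cnj s2)
        = Z * cnj Z + Y * cnj Y * (u * cnj u) * (p * cnj p) - (Z * cnj Y * u * cnj p + cnj Z * Y * cnj u * p)"
      unfolding s2_def by (simp add: algebra_simps)
    also have "\<dots> = Z * cnj Z + Y * cnj Y + X * cnj Y * Z" using h1 h2 w2 by simp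
    also have "\<dots> = D * cnj D" using h7 XX DD by algebra
    finally show "(Z - Y * cnj s2) * cnj (Z - Y * cnj s2) = D * cnj D" .
  qed
  have n4: "cmod (Y * cnj s1 - Z) = cmod D"
  proof (rule eq_norm_from_sq)
    have "(Y * cnj s1 - Z) * cnj (Y * cnj s1 - Z)
        = Z * cnj Z + Y * cnj Y * (u * cnj u) * (p * cnj p) - (Z * cnj Y * u * cnj p + cnj Z * Y * cnj u * p)"
      unfolding s1_def using h6 by (simp add: algebra_simps)
    also have "\<dots> = Z * cnj Z + Y * cnj Y + X * cnj Y * Z" using h1 h2 w2 by simp
    also have "\<dots> = D * cnj D" using h7 XX DD by algebra
    finally show "(Y * cnj s1 - Z) * cnj (Y * cnj s1 - Z) = D * cnj D" .
  qed
  have D2: "D = cnj s2 - cnj s1" by (simp add: D_def s1_def s2_def)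
  have "cmod s1 = 1" "cmod s2 = 1" using cp u1 by (simp_all add: s1_def s2_def norm_mult)
  moreover have "cmod s3 = 1" "cmod s4 = 1" using n3 n4 Dne by (simp_all add: s3_def s4_def norm_divide)
  moreover have "s1 + s2 = -X"
  proof -
    have "s1 + s2 = u * (p + cnj p)" unfolding s1_def s2_def by (simp only: distrib_left)
    also have "\<dots> = -X" unfolding h3 h4 by simp
    finally show ?thesis .
  qed
  moreover have "s3 + s4 = -Y"
  proof -
    have "s3 + s4 = ((Z - Y * cnj s2) + (Y * cnj s1 - Z)) / D"
      by (simp only: s3_def s4_def add_divide_distrib)
    also have "(Z - Y * cnj s2) + (Y * cnj s1 - Z) = - Y * D" unfolding D2 by (simp add: algebra_simps)
    finally show ?thesis using Dne by simp
  qed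
  moreover have "cnj s1 * s3 + cnj s2 * s4 = -Z"
  proof -
    have "cnj s1 * s3 + cnj s2 * s4 = (cnj s1 * (Z - Y * cnj s2) + cnj s2 * (Y * cnj s1 - Z)) / D"
      by (simp only: s3_def s4_def add_divide_distrib times_divide_eq_right)
    also have "cnj s1 * (Z - Y * cnj s2) + cnj s2 * (Y * cnj s1 - Z) = - Z * D"
      unfolding D2 by (simp add: algebra_simps)
    finally show ?thesis using Dne by simp
  qed
  ultimately show ?thesis by blast
qed


lemma forward_alg:
  fixes s1 s2 s3 s4 X Y Z :: complex
  assumes "cmod s1 = 1" "cmod s2 = 1" "cmod s3 = 1" "cmod s4 = 1"
    and "s1 + s2 = -X" "s3 + s4 = -Y" "cnj s1 * s3 + cnj s2 * s4 = -Z"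
  shows "X * cnj Y * Z = 4 - X * cnj X - Y * cnj Y - Z * cnj Z"
proof -
  have u: "s1 * cnj s1 = 1" "s2 * cnj s2 = 1" "s3 * cnj s3 = 1" "s4 * cnj s4 = 1"
    using assms(1-4) complex_norm_square by (metis of_real_1 power_one)+
  have X1: "X = -(s1+s2)" using assms(5) by (metis minus_minus)
  have X: "X = -(s1+s2)" "cnj X = -(cnj s1 + cnj s2)" using X1 by simp_all
  have Y1: "Y = -(s3+s4)" using assms(6) by (metis minus_minus)
  have Y: "Y = -(s3+s4)" "cnj Y = -(cnj s3 + cnj s4)" using Y1 by simp_all
  have Z1: "Z = -(cnj s1 * s3 + cnj s2 * s4)" using assms(7) by (metis minus_minus)
  have Z: "Z = -(cnj s1 * s3 + cnj s2 * s4)" "cnj Z = -(s1 * cnj s3 + s2 * cnj s4)"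
    using Z1 by simp_all
  show ?thesis unfolding X(2) Y(2) Z(2) unfolding X(1) Y(1) Z(1) using u by algebra
qed

lemma back_edge:
  fixes a b c d e f :: complex
  assumes units: "cmod a = 1" "cmod b = 1" "cmod c = 1" "cmod d = 1" "cmod e = 1" "cmod f = 1"
  defines "X \<equiv> 1 + a + b + e" and "Y \<equiv> 1 + c + d + f"
    and "Z \<equiv> 1 + c * cnj a + d * cnj b + f * cnj e"
  assumes H: "X * cnj Y * Z = of_real (4 - cmod X^2 - cmod Y^2 - cmod Z^2)" and X2: "cmod X = 2"
  shows "\<exists>s1 s2 s3 s4. cmod s1 = 1 \<and> cmod s2 = 1 \<and> cmod s3 = 1 \<and> cmod s4 = 1 \<and>
          s1 + s2 = -X \<and> s3 + s4 = -Y \<and> cnj s1 * s3 + cnj s2 * s4 = -Z"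
proof -
  have h7: "X * cnj Y * Z = 4 - X * cnj X - Y * cnj Y - Z * cnj Z"
    using H by (simp add: complex_norm_square[symmetric])
  have h8: "cnj X * Y * cnj Z = 4 - X * cnj X - Y * cnj Y - Z * cnj Z"
  proof -
    have "cnj (X * cnj Y * Z) = X * cnj Y * Z" using H by (metis complex_cnj_complex_of_real)
    then have "cnj X * Y * cnj Z = X * cnj Y * Z" by (simp only: complex_cnj_mult complex_cnj_cnj)
    then show ?thesis using h7 by simp
  qed
  have XX: "X * cnj X = 4" using X2 complex_norm_square[of X] by simp
  have "(Z + cnj X * Y / 2) * cnj (Z + cnj X * Y / 2) = 0"
  proof -
    have "(Z + cnj X * Y / 2) * cnj (Z + cnj X * Y / 2)
       = Z * cnj Z + (X * cnj Y * Z + cnj X * Y * cnj Z) / 2 + (X * cnj X) * (Y * cnj Y) / 4"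
      by (simp add: algebra_simps)
    then show ?thesis using h7 h8 XX by algebra
  qed
  then have "Z + cnj X * Y / 2 = 0" by (simp only: mult_eq_0_iff complex_cnj_zero_iff) blast
  then have ZZ: "Z = - (cnj X * Y / 2)" by (metis add_eq_0_iff2 minus_minus)
  have ua: "a * cnj a = 1" "b * cnj b = 1" "c * cnj c = 1" "d * cnj d = 1" "e * cnj e = 1" "f * cnj f = 1"
    using units complex_norm_square by (metis of_real_1 power_one)+
  define v0 where "v0 = 1/2 - cnj X / 4"
  define va where "va = 1/2 - cnj X * a / 4"
  define vb where "vb = 1/2 - cnj X * b / 4"
  define ve where "ve = 1/2 - cnj X * e / 4"
  have cX: "cnj X = 1 + cnj a + cnj b + cnj e" by (simp add: X_def)
  have Yv: "Y = cnj v0 + c * cnj va + d * cnj vb + f * cnj ve"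
  proof -
    have "cnj v0 + c * cnj va + d * cnj vb + f * cnj ve = Y / 2 - X * Z / 4"
      by (simp add: v0_def va_def vb_def ve_def Y_def Z_def algebra_simps)
    also have "\<dots> = Y"
    proof -
      have "X * Z = - (X * cnj X) * Y / 2" by (simp add: ZZ algebra_simps)
      then have "X * Z = - 2 * Y" using XX by simp
      then show ?thesis by simp
    qed
    finally show ?thesis by simp
  qed
  have "cmod Y \<le> cmod (cnj v0) + cmod (c * cnj va) + cmod (d * cnj vb) + cmod (f * cnj ve)"
    unfolding Yv by (meson norm_triangle_le order_trans add_mono order_refl)
  then have tri: "cmod Y \<le> cmod v0 + cmod va + cmod vb + cmod ve" using units by (simp add: norm_mult)
  have sq: "v0 * cnj v0 + va * cnj va + vb * cnj vb + ve * cnj ve = 1"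
  proof -
    have "v0 * cnj v0 + va * cnj va + vb * cnj vb + ve * cnj ve
        = 1 + (X * cnj X) * (1 + a * cnj a + b * cnj b + e * cnj e) / 16
            - (cnj X * (1 + a + b + e) + X * (1 + cnj a + cnj b + cnj e)) / 8"
      by (simp add: v0_def va_def vb_def ve_def field_simps)
    also have "\<dots> = 1"
    proof -
      have A: "1 + a*cnj a + b*cnj b + e*cnj e = 4" using ua by simp
      have B: "cnj X*(1+a+b+e) + X*(1+cnj a+cnj b+cnj e) = 8"
        unfolding X_def[symmetric] cX[symmetric] using XX by (simp add: mult.commute)
      show ?thesis unfolding A B XX by simp
    qed
    finally show ?thesis .
  qed
  have "cmod v0 ^ 2 + cmod va ^ 2 + cmod vb ^ 2 + cmod ve ^ 2 = 1"
  proof -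
    have "complex_of_real (cmod v0 ^ 2 + cmod va ^ 2 + cmod vb ^ 2 + cmod ve ^ 2) = 1"
      using sq by (simp only: of_real_add complex_norm_square)
    then show ?thesis by (metis of_real_1 of_real_eq_iff)
  qed
  moreover have "(cmod v0 + cmod va + cmod vb + cmod ve)^2 \<le> 4 * (cmod v0 ^ 2 + cmod va ^ 2 + cmod vb ^ 2 + cmod ve ^ 2)"
  proof -
    fix p q r t :: real
    have "\<And>p q r t :: real. (p+q+r+t)^2 \<le> 4 * (p^2+q^2+r^2+t^2)"
    proof -
      fix p q r t :: real
      have "0 \<le> (p-q)^2 + (p-r)^2 + (p-t)^2 + (q-r)^2 + (q-t)^2 + (r-t)^2" by simp
      then show "(p+q+r+t)^2 \<le> 4 * (p^2+q^2+r^2+t^2)" by (simp add: power2_eq_square algebra_simps)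
    qed
    then show ?thesis .
  qed
  ultimately have "(cmod v0 + cmod va + cmod vb + cmod ve)^2 \<le> 2^2" by simp
  then have "cmod v0 + cmod va + cmod vb + cmod ve \<le> 2"
    by (rule power2_le_imp_le) simp
  with tri have "cmod Y \<le> 2" by simp
  then obtain s3 s4 where s34: "cmod s3 = 1" "cmod s4 = 1" "s3 + s4 = -Y" using unit_pair by blast
  have s1: "cmod (-X/2) = 1" using X2 by (simp add: norm_divide)
  have "cnj (-X/2) * s3 + cnj (-X/2) * s4 = -Z"
  proof -
    have "cnj (-X/2) * s3 + cnj (-X/2) * s4 = cnj (-X/2) * (s3 + s4)" by (simp only: distrib_left)
    also have "\<dots> = -Z" unfolding s34(3) ZZ by simp
    finally show ?thesis .
  qed
  moreover have "-X/2 + -X/2 = -X" by simp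
  ultimately show ?thesis using s1 s34 by blast
qed


lemma cinner1: "cinner [1,1,1,1,1,1] [1,x1,x2,x3,x4,x5] = cnj (1 + x1 + x2 + x3 + x4 + x5)"
  by (simp add: cinner_def numeral_eq_Suc lessThan_Suc)

lemma cinner2: "cinner [1,a,b,e,s1,s2] [1,c,d,f,s3,s4]
   = cnj ((1 + c * cnj a + d * cnj b + f * cnj e) + cnj s1 * s3 + cnj s2 * s4)"
  by (simp add: cinner_def numeral_eq_Suc lessThan_Suc mult.commute)

lemma HH_eq: "HH a b c d e f = (1 + a + b + e) * cnj (1 + c + d + f) * (1 + c * cnj a + d * cnj b + f * cnj e)"
  by (simp add: HH_def)

lemma sum0_iff: "(x + s1 + s2 = 0) = (s1 + s2 = - (x::complex))"
  by (metis add.assoc add_eq_0_iff2 add.commute)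

theorem theorem2p15:
  fixes a b c d e f :: complex
  assumes "cmod a = 1" "cmod b = 1" "cmod c = 1" "cmod d = 1" "cmod e = 1" "cmod f = 1"
  shows "(\<exists>s1 s2 s3 s4 :: complex. cmod s1 = 1 \<and> cmod s2 = 1 \<and> cmod s3 = 1 \<and> cmod s4 = 1 \<and>
            cinner [1,1,1,1,1,1] [1,a,b,e,s1,s2] = 0 \<and>
            cinner [1,1,1,1,1,1] [1,c,d,f,s3,s4] = 0 \<and>
            cinner [1,a,b,e,s1,s2] [1,c,d,f,s3,s4] = 0)
     \<longleftrightarrow>
         (HH a b c d e f = complex_of_real (4 - (cmod (1 + a + b + e))^2 - (cmod (1 + c + d + f))^2
              - (cmod (1 + c * cnj a + d * cnj b + f * cnj e))^2)
          \<and> cmod (1 + a + b + e) \<le> 2)"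
proof -
  define X where "X = 1 + a + b + e"
  define Y where "Y = 1 + c + d + f"
  define Z where "Z = 1 + c * cnj a + d * cnj b + f * cnj e"
  have eqv: "(cmod s1 = 1 \<and> cmod s2 = 1 \<and> cmod s3 = 1 \<and> cmod s4 = 1 \<and>
            cinner [1,1,1,1,1,1] [1,a,b,e,s1,s2] = 0 \<and>
            cinner [1,1,1,1,1,1] [1,c,d,f,s3,s4] = 0 \<and>
            cinner [1,a,b,e,s1,s2] [1,c,d,f,s3,s4] = 0) \<longleftrightarrow>
         (cmod s1 = 1 \<and> cmod s2 = 1 \<and> cmod s3 = 1 \<and> cmod s4 = 1 \<and>
          s1 + s2 = -X \<and> s3 + s4 = -Y \<and> cnj s1 * s3 + cnj s2 * s4 = -Z)" for s1 s2 s3 s4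
  proof -
    have e1: "cinner [1,1,1,1,1,1] [1,a,b,e,s1,s2] = 0 \<longleftrightarrow> s1 + s2 = -X"
      unfolding cinner1 complex_cnj_zero_iff X_def eq_neg_iff_add_eq_0 by (simp only: ac_simps)
    have e2: "cinner [1,1,1,1,1,1] [1,c,d,f,s3,s4] = 0 \<longleftrightarrow> s3 + s4 = -Y"
      unfolding cinner1 complex_cnj_zero_iff Y_def eq_neg_iff_add_eq_0 by (simp only: ac_simps)
    have e3: "cinner [1,a,b,e,s1,s2] [1,c,d,f,s3,s4] = 0 \<longleftrightarrow> cnj s1 * s3 + cnj s2 * s4 = -Z"
      unfolding cinner2 complex_cnj_zero_iff Z_def eq_neg_iff_add_eq_0 by (simp only: ac_simps)
    show ?thesis unfolding e1 e2 e3 ..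
  qed
  have HX: "HH a b c d e f = X * cnj Y * Z" by (simp add: HH_eq X_def Y_def Z_def)
  have sqX: "of_real ((cmod W)^2) = W * cnj W" for W by (rule complex_norm_square)
  show ?thesis
    unfolding eqv HX X_def[symmetric] Y_def[symmetric] Z_def[symmetric]
  proof
    assume "\<exists>s1 s2 s3 s4. cmod s1 = 1 \<and> cmod s2 = 1 \<and> cmod s3 = 1 \<and> cmod s4 = 1 \<and>
          s1 + s2 = -X \<and> s3 + s4 = -Y \<and> cnj s1 * s3 + cnj s2 * s4 = -Z"
    then obtain s1 s2 s3 s4 where s: "cmod s1 = 1" "cmod s2 = 1" "cmod s3 = 1" "cmod s4 = 1"
      "s1 + s2 = -X" "s3 + s4 = -Y" "cnj s1 * s3 + cnj s2 * s4 = -Z" by blast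
    have "X * cnj Y * Z = 4 - X * cnj X - Y * cnj Y - Z * cnj Z" by (rule forward_alg[OF s])
    then have "X * cnj Y * Z = of_real (4 - cmod X^2 - cmod Y^2 - cmod Z^2)"
      by (simp only: of_real_diff of_real_numeral sqX)
    moreover have "cmod X \<le> 2"
    proof -
      have "cmod X = cmod (s1 + s2)" using s(5) by (metis norm_minus_cancel)
      also have "\<dots> \<le> 2" using norm_triangle_ineq[of s1 s2] s by simp
      finally show ?thesis .
    qed
    ultimately show "X * cnj Y * Z = of_real (4 - cmod X^2 - cmod Y^2 - cmod Z^2) \<and> cmod X \<le> 2" by blast
  next
    assume A: "X * cnj Y * Z = of_real (4 - cmod X^2 - cmod Y^2 - cmod Z^2) \<and> cmod X \<le> 2"
    show "\<exists>s1 s2 s3 s4. cmod s1 = 1 \<and> cmod s2 = 1 \<and> cmod s3 = 1 \<and> cmod s4 = 1 \<and>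
          s1 + s2 = -X \<and> s3 + s4 = -Y \<and> cnj s1 * s3 + cnj s2 * s4 = -Z"
    proof (cases "cmod X < 2")
      case True then show ?thesis using back_main A by blast
    next
      case False
      then have "cmod X = 2" using A by simp
      then show ?thesis using back_edge[OF assms] A unfolding X_def Y_def Z_def by blast
    qed
  qed
qed

end
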